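(* Assume $\alpha>\beta\ge1$ and let $(U,V,\Lambda)$ be the similarity profile. For all measurable $\rho,\zeta:\mathbb R\to(0,\infty)$ for which the integrals are defined, setting $\mathbf u=(\rho U,\zeta V)$, $$\mathcal I_{\Lambda,2}(\rho,\zeta)\le\theta\,\mathcal E_{\mathrm B}(\mathbf u|\mathbf U),\qquad\theta:=(\alpha-\beta)\|\Lambda/V\|_{L^\infty}.$$
   Context: Fix $d_1,d_2,k>0$, real stoichiometric coefficients $\alpha,\beta\ge1$ and $A_-,A_+>0$. The similarity profile is a triple $(U,V,\Lambda)$ with $U,V\in\mathrm C^2(\mathbb R)$ positive, bounded and bounded away from $0$, $\Lambda:\mathbb R\to\mathbb R$, satisfying $d_1U''+\tfrac y2U'+\alpha\Lambda=0$, $d_2V''+\tfrac y2V'-\beta\Lambda=0$, $U^\alpha=V^\beta$ on $\mathbb R$, and $U(\pm\infty)=A_\pm^\beta$, $V(\pm\infty)=A_\pm^\alpha$; $\mathbf U=(U,V)$. $\lambda_{\mathrm B}(z)=z\log z-z+1$; $\mathcal E_{\mathrm B}(\mathbf u|\mathbf U)=\int_{\mathbb R}\big(\lambda_{\mathrm B}(\rho)U+\lambda_{\mathrm B}(\zeta)V\big)\mathrm dy$ with $\rho=u/U$, $\zeta=v/V$. Let $\Psi(r)=\alpha(r^{1/\alpha}-1)$ for $r\ge0$. The mixed term $\mathcal I_\Lambda(\rho,\zeta)=\int_{\mathbb R}\big((\zeta-1)\beta-(\rho-1)\alpha\big)\Lambda\,\mathrm dy$ is split as $\mathcal I_\Lambda=\mathcal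 I_{\Lambda,1}+\mathcal I_{\Lambda,2}$ with $\mathcal I_{\Lambda,1}(\rho,\zeta)=\int_{\mathbb R}\big(\Psi(\zeta^\beta)-\Psi(\rho^\alpha)\big)\Lambda\,\mathrm dy$ and $\mathcal I_{\Lambda,2}(\rho,\zeta)=\int_{\mathbb R}\Big(\big(\zeta-1-\tfrac1\beta\Psi(\zeta^\beta)\big)\beta-\big(\rho-1-\tfrac1\alpha\Psi(\rho^\alpha)\big)\alpha\Big)\Lambda\,\mathrm dy$. $\|\cdot\|_{L^\infty}$ is the supremum of the absolute value. *)

theory Defs
  imports "HOL-Analysis.Analysis"
begin

definition C2_real :: "(real \<Rightarrow> real) \<Rightarrow> bool" where
  "C2_real f \<longleftrightarrow> (\<exists>f' f''. (\<forall>y. (f has_real_derivative f' y) (at y)) \<and>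
      (\<forall>y. (f' has_real_derivative f'' y) (at y)) \<and> continuous_on UNIV f'')"

definition similarity_profile ::
  "real \<Rightarrow> real \<Rightarrow> real \<Rightarrow> real \<Rightarrow> real \<Rightarrow> real \<Rightarrow>
   (real \<Rightarrow> real) \<Rightarrow> (real \<Rightarrow> real) \<Rightarrow> (real \<Rightarrow> real) \<Rightarrow> bool" where
  "similarity_profile d1 d2 \<alpha> \<beta> Am Ap U V \<Lambda> \<longleftrightarrow>
     C2_real U \<and> C2_real V \<and>
     (\<forall>y. U y > 0) \<and> (\<forall>y. V y > 0) \<and>
     (\<exists>C. \<forall>y. U y \<le> C) \<and> (\<exists>C. \<forall>y. V y \<le> C) \<and>
     (\<exists>c>0. \<forall>y. c \<le> U y) \<and> (\<exists>c>0. \<forall>y. c \<le> V y) \<and>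
     (\<forall>y. d1 * deriv (deriv U) y + y / 2 * deriv U y + \<alpha> * \<Lambda> y = 0) \<and>
     (\<forall>y. d2 * deriv (deriv V) y + y / 2 * deriv V y - \<beta> * \<Lambda> y = 0) \<and>
     (\<forall>y. U y powr \<alpha> = V y powr \<beta>) \<and>
     (U \<longlongrightarrow> Am powr \<beta>) at_bot \<and> (U \<longlongrightarrow> Ap powr \<beta>) at_top \<and>
     (V \<longlongrightarrow> Am powr \<alpha>) at_bot \<and> (V \<longlongrightarrow> Ap powr \<alpha>) at_top"

definition lambdaB :: "real \<Rightarrow> real" where
  "lambdaB z = z * ln z - z + 1"

text \<open>Integrand of the relative Boltzmann entropy E_B(u|U) with rho = u/U, zeta = v/V.\<close>
definition EB_integrand ::
  "(real \<Rightarrow> real) \<Rightarrow> (real \<Rightarrow> real) \<Rightarrow> (real \<Rightarrow> real) \<Rightarrow> (real \<Rightarrow> real) \<Rightarrow> real \<Rightarrow> real" where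
  "EB_integrand U V \<rho> \<zeta> y = lambdaB (\<rho> y) * U y + lambdaB (\<zeta> y) * V y"

definition EB ::
  "(real \<Rightarrow> real) \<Rightarrow> (real \<Rightarrow> real) \<Rightarrow> (real \<Rightarrow> real) \<Rightarrow> (real \<Rightarrow> real) \<Rightarrow> real" where
  "EB U V \<rho> \<zeta> = integral\<^sup>L lborel (EB_integrand U V \<rho> \<zeta>)"

definition Psi :: "real \<Rightarrow> real \<Rightarrow> real" where
  "Psi \<alpha> r = \<alpha> * (r powr (1 / \<alpha>) - 1)"

definition I2_integrand ::
  "real \<Rightarrow> real \<Rightarrow> (real \<Rightarrow> real) \<Rightarrow> (real \<Rightarrow> real) \<Rightarrow> (real \<Rightarrow> real) \<Rightarrow> real \<Rightarrow> real" where
  "I2_integrand \<alpha> \<beta> \<Lambda> \<rho> \<zeta> y =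
     ((\<zeta> y - 1 - Psi \<alpha> (\<zeta> y powr \<beta>) / \<beta>) * \<beta>
      - (\<rho> y - 1 - Psi \<alpha> (\<rho> y powr \<alpha>) / \<alpha>) * \<alpha>) * \<Lambda> y"

definition I_Lambda2 ::
  "real \<Rightarrow> real \<Rightarrow> (real \<Rightarrow> real) \<Rightarrow> (real \<Rightarrow> real) \<Rightarrow> (real \<Rightarrow> real) \<Rightarrow> real" where
  "I_Lambda2 \<alpha> \<beta> \<Lambda> \<rho> \<zeta> = integral\<^sup>L lborel (I2_integrand \<alpha> \<beta> \<Lambda> \<rho> \<zeta>)"

definition sup_norm :: "(real \<Rightarrow> real) \<Rightarrow> real" where
  "sup_norm f = (SUP y. \<bar>f y\<bar>)"

end

theory Submission
  imports Defs
begin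

lemma lamB_nonneg: assumes "z > 0" shows "lambdaB z \<ge> 0"
proof -
  have "ln (1/z) \<le> 1/z - 1" using assms by (intro ln_le_minus_one) auto
  hence "- ln z \<le> 1/z - 1" using assms by (simp add: ln_div)
  hence "z * (- ln z) \<le> z * (1/z - 1)" using assms by (intro mult_left_mono) auto
  thus ?thesis using assms unfolding lambdaB_def by (simp add: algebra_simps)
qed

lemma f_bounds:
  fixes a b z :: real
  assumes "a > b" "b \<ge> 1" "z > 0"
  shows "0 \<le> b*(z-1) - a*(z powr (b/a) - 1)"
    and "b*(z-1) - a*(z powr (b/a) - 1) \<le> (a-b) * lambdaB z"
proof -
  have a0: "a > 0" using assms by auto
  have "z powr (b/a) * 1 powr (1 - b/a) \<le> (b/a)*z + (1-b/a)*1"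
    using assms a0 by (intro Youngs_inequality_0) (auto simp: field_simps)
  hence "z powr (b/a) \<le> (b/a)*z + (1-b/a)" by simp
  hence "a * z powr (b/a) \<le> a*((b/a)*z + (1-b/a))" using a0 by (intro mult_left_mono) auto
  also have "\<dots> = b*z + a - b" using a0 by (simp add: field_simps)
  finally show "0 \<le> b*(z-1) - a*(z powr (b/a) - 1)" by (simp add: algebra_simps)
  have "1 + (b/a - 1) * ln z \<le> exp ((b/a - 1) * ln z)" by (rule exp_ge_add_one_self)
  also have "exp ((b/a - 1) * ln z) = z powr (b/a - 1)" using assms by (simp add: powr_def)
  finally have e: "1 + (b/a - 1) * ln z \<le> z powr (b/a - 1)" .
  hence "(a*z) * (1 + (b/a - 1) * ln z) \<le> (a*z) * z powr (b/a - 1)"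
    using a0 assms by (intro mult_left_mono) auto
  also have "(a*z) * z powr (b/a - 1) = a * z powr (b/a)"
  proof -
    have "z * z powr (b/a - 1) = z powr 1 * z powr (b/a - 1)" using assms by simp
    also have "\<dots> = z powr (1 + (b/a - 1))" by (rule powr_add[symmetric])
    also have "\<dots> = z powr (b/a)" by simp
    finally show ?thesis by (metis mult.assoc)
  qed
  finally have ineq: "(a*z) * (1 + (b/a - 1) * ln z) \<le> a * z powr (b/a)" .
  have "(a*z) * (1 + (b/a - 1) * ln z) = a*z + (b - a) * z * ln z"
    using a0 by (simp add: algebra_simps)
  with ineq have "a*z + (b - a) * z * ln z \<le> a * z powr (b/a)" by simp
  thus "b*(z-1) - a*(z powr (b/a) - 1) \<le> (a-b) * lambdaB z"
    unfolding lambdaB_def by (simp add: algebra_simps)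
qed


theorem mainTheorem15:
  fixes d1 d2 k \<alpha> \<beta> Am Ap :: real
    and U V \<Lambda> \<rho> \<zeta> :: "real \<Rightarrow> real"
  assumes "d1 > 0" "d2 > 0" "k > 0"
    and "\<alpha> > \<beta>" "\<beta> \<ge> 1"
    and "Am > 0" "Ap > 0"
    and "similarity_profile d1 d2 \<alpha> \<beta> Am Ap U V \<Lambda>"
    and "bdd_above (range (\<lambda>y. \<bar>\<Lambda> y / V y\<bar>))"
    and "\<rho> \<in> borel_measurable lborel" "\<zeta> \<in> borel_measurable lborel"
    and "\<forall>y. \<rho> y > 0" "\<forall>y. \<zeta> y > 0"
    and "integrable lborel (I2_integrand \<alpha> \<beta> \<Lambda> \<rho> \<zeta>)"
    and "integrable lborel (EB_integrand U V \<rho> \<zeta>)"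
  shows "I_Lambda2 \<alpha> \<beta> \<Lambda> \<rho> \<zeta>
           \<le> ((\<alpha> - \<beta>) * sup_norm (\<lambda>y. \<Lambda> y / V y)) * EB U V \<rho> \<zeta>"
proof -
  define M where "M = sup_norm (\<lambda>y. \<Lambda> y / V y)"
  have Upos: "\<forall>y. U y > 0" and Vpos: "\<forall>y. V y > 0"
    using assms(8) unfolding similarity_profile_def by auto
  have a0: "\<alpha> > 0" using assms by auto
  have Mge: "\<bar>\<Lambda> y / V y\<bar> \<le> M" for y
    unfolding M_def sup_norm_def by (rule cSUP_upper[OF _ assms(9)]) auto
  have M0: "M \<ge> 0" using Mge[of 0] by linarith
  have pt: "I2_integrand \<alpha> \<beta> \<Lambda> \<rho> \<zeta> y \<le> ((\<alpha> - \<beta>) * M) * EB_integrand U V \<rho> \<zeta> y" for y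
  proof -
    let ?z = "\<zeta> y" and ?r = "\<rho> y"
    have z0: "?z > 0" and r0: "?r > 0" using assms by auto
    have ps1: "Psi \<alpha> (?r powr \<alpha>) = \<alpha> * (?r - 1)"
      using r0 a0 by (simp add: Psi_def powr_powr)
    have ps2: "Psi \<alpha> (?z powr \<beta>) = \<alpha> * (?z powr (\<beta>/\<alpha>) - 1)"
      using z0 a0 by (simp add: Psi_def powr_powr)
    define f where "f = \<beta>*(?z-1) - \<alpha>*(?z powr (\<beta>/\<alpha>) - 1)"
    have eq: "I2_integrand \<alpha> \<beta> \<Lambda> \<rho> \<zeta> y = f * \<Lambda> y"
      unfolding I2_integrand_def ps1 ps2 f_def using a0 assms(5)
      by (simp add: field_simps)
    have f0: "0 \<le> f" and f1: "f \<le> (\<alpha>-\<beta>) * lambdaB ?z"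
      unfolding f_def using f_bounds[OF assms(4) assms(5) z0] by auto
    have VV: "V y > 0" using Vpos by auto
    have "\<Lambda> y \<le> \<bar>\<Lambda> y / V y\<bar> * V y" using VV
      by (simp add: abs_divide abs_of_pos)
    also have "\<dots> \<le> M * V y" using Mge[of y] VV by (intro mult_right_mono) auto
    finally have L: "\<Lambda> y \<le> M * V y" .
    have "f * \<Lambda> y \<le> f * (M * V y)" using mult_left_mono[OF L f0] .
    also have "\<dots> \<le> ((\<alpha>-\<beta>) * lambdaB ?z) * (M * V y)"
      using f1 M0 VV by (intro mult_right_mono) auto
    also have "\<dots> = ((\<alpha> - \<beta>) * M) * (lambdaB ?z * V y)" by (simp add: algebra_simps)
    also have "\<dots> \<le> ((\<alpha> - \<beta>) * M) * EB_integrand U V \<rho> \<zeta> y"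
      unfolding EB_integrand_def
      using lamB_nonneg[OF r0] Upos[rule_format, of y] M0 assms(4) by (intro mult_left_mono) (auto intro: mult_nonneg_nonneg)
    finally show ?thesis using eq by simp
  qed
  have "I_Lambda2 \<alpha> \<beta> \<Lambda> \<rho> \<zeta> \<le> integral\<^sup>L lborel (\<lambda>y. ((\<alpha> - \<beta>) * M) * EB_integrand U V \<rho> \<zeta> y)"
    unfolding I_Lambda2_def
    by (rule integral_mono[OF assms(14) _ pt]) (use assms(15) in auto)
  also have "\<dots> = ((\<alpha> - \<beta>) * M) * EB U V \<rho> \<zeta>" unfolding EB_def by simp
  finally show ?thesis unfolding M_def .
qed

end
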